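(* Let $y\ge1$ and let $k\ge2$ be an integer. For $\Re s>1$ let $f_y(s)=\sum_{n>y}\mu(n)n^{-s}$, and let $\sum_{d=1}^\infty a_d d^{-s}$ be the Dirichlet series of $\zeta(s)f_y(ks)$ (valid for $\Re s>1$). Then $|a_d|\le y$ for every $d\ge1$.
   Context: $\mu$ denotes the Möbius function and $\zeta$ the Riemann zeta-function; the sum defining $f_y$ runs over integers $n>y$. *)

theory Defs
  imports "HOL-Analysis.Analysis" "HOL-Computational_Algebra.Squarefree"
begin

definition moebius_mu :: "nat \<Rightarrow> int" where
  "moebius_mu n = (if n = 0 \<or> \<not> squarefree n then 0 else (-1) ^ card (prime_factors n))"

text \<open>Riemann zeta function on the half-plane Re s > 1, given by its Dirichlet series.\<close>
definition zeta :: "complex \<Rightarrow> complex" where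
  "zeta s = infsum (\<lambda>n::nat. of_nat n powr (-s)) {1..}"

definition f_tail :: "real \<Rightarrow> complex \<Rightarrow> complex" where
  "f_tail y s = infsum (\<lambda>n::nat. of_int (moebius_mu n) * of_nat n powr (-s)) {n. real n > y}"

end

theory Submission
  imports Defs
begin


lemma mu_abs_le: "\<bar>moebius_mu n\<bar> \<le> 1"
  by (simp add: moebius_mu_def)

lemma mu_sq_zero:
  assumes "prime (p::nat)" "p^2 dvd m"
  shows "moebius_mu m = 0"
proof -
  have "\<not> squarefree m" using assms unfolding squarefree_def
    using not_prime_unit by blast
  thus ?thesis by (simp add: moebius_mu_def)
qed

lemma mu_mult_prime:
  assumes p: "prime (p::nat)" and np: "\<not> p dvd m" and m: "m > 0"
  shows "moebius_mu (p*m) = - moebius_mu m"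
proof -
  have cop: "coprime p m" using p np by (simp add: prime_imp_coprime)
  have sq: "squarefree (p*m) \<longleftrightarrow> squarefree m"
    using cop squarefree_mult_coprime[of p m] squarefree_multD(2)[of p m]
      p by (meson squarefree_prime)
  have pf: "prime_factors (p*m) = insert p (prime_factors m)"
    using prime_factors_product[of p m] p m by (auto simp: prime_prime_factors)
  have "p \<notin> prime_factors m" using np by auto
  hence "card (prime_factors (p*m)) = Suc (card (prime_factors m))"
    using pf by simp
  thus ?thesis using sq p m by (auto simp: moebius_mu_def)
qed

lemma mu_sum_zero:
  assumes fin: "finite S" and p: "prime (p::nat)" and S0: "0 \<notin> S"
    and up: "\<And>m. m \<in> S \<Longrightarrow> \<not> p dvd m \<Longrightarrow> p*m \<in> S"
    and down: "\<And>m. m \<in> S \<Longrightarrow> p dvd m \<Longrightarrow> m div p \<in> S"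
  shows "(\<Sum>m\<in>S. moebius_mu m) = 0"
proof -
  define A where "A = {m\<in>S. \<not> p dvd m}"
  define B where "B = {m\<in>S. p dvd m}"
  define B' where "B' = {m\<in>S. p dvd m \<and> \<not> p^2 dvd m}"
  have p0: "p > 0" using p prime_gt_0_nat by blast
  have "(\<Sum>m\<in>S. moebius_mu m) = (\<Sum>m\<in>A. moebius_mu m) + (\<Sum>m\<in>B. moebius_mu m)"
    unfolding A_def B_def using fin by (subst sum.union_disjoint[symmetric]) (auto intro: sum.cong)
  also have "(\<Sum>m\<in>B. moebius_mu m) = (\<Sum>m\<in>B'. moebius_mu m)"
    by (rule sum.mono_neutral_right) (use fin p in \<open>auto simp: B_def B'_def intro: mu_sq_zero\<close>)
  also have "B' = (\<lambda>m. p*m) ` A"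
  proof
    show "(\<lambda>m. p*m) ` A \<subseteq> B'"
    proof
      fix x assume "x \<in> (\<lambda>m. p*m) ` A"
      then obtain m where x: "x = p*m" and m: "m \<in> A" by auto
      have "\<not> p^2 dvd p*m" using m p0 by (auto simp: A_def power2_eq_square)
      thus "x \<in> B'" using m up x by (auto simp: A_def B'_def)
    qed
  next
    show "B' \<subseteq> (\<lambda>m. p*m) ` A"
    proof
      fix x assume x: "x \<in> B'"
      hence px: "p dvd x" and xS: "x \<in> S" and np2: "\<not> p^2 dvd x" by (auto simp: B'_def)
      have e: "x = p * (x div p)" using px by simp
      have "\<not> p dvd x div p"
      proof
        assume "p dvd x div p"
        then obtain t where "x div p = p*t" by blast
        hence "x = p^2 * t" using e by (simp add: power2_eq_square)
        thus False using np2 by simp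
      qed
      hence "x div p \<in> A" using down[OF xS px] by (simp add: A_def)
      thus "x \<in> (\<lambda>m. p*m) ` A" using e by blast
    qed
  qed
  also have "(\<Sum>m\<in>(\<lambda>m. p*m) ` A. moebius_mu m) = (\<Sum>m\<in>A. moebius_mu (p*m))"
    using sum.reindex[of "\<lambda>m. p*m" A moebius_mu] p0 by (simp add: inj_on_def)
  also have "\<dots> = (\<Sum>m\<in>A. - moebius_mu m)"
    by (rule sum.cong) (use S0 p in \<open>auto simp: A_def intro!: mu_mult_prime intro: gr0I\<close>)
  finally show ?thesis by (simp add: sum_negf)
qed



definition Mset :: "real \<Rightarrow> nat \<Rightarrow> nat \<Rightarrow> nat set" where
  "Mset y k d = {m. real m > y \<and> m^k dvd d}"

lemma le_of_pow_dvd: "m^k dvd d \<Longrightarrow> d > 0 \<Longrightarrow> k \<ge> 1 \<Longrightarrow> m \<le> (d::nat)"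
proof -
  assume a: "m^k dvd d" "d > 0" "k \<ge> 1"
  have "m^k \<le> d" using a by (simp add: dvd_imp_le)
  moreover have "m \<le> m^k" using a(3)
    by (cases "m = 0") (auto intro: self_le_power)
  ultimately show ?thesis by linarith
qed

lemma finite_Sd: "d > 0 \<Longrightarrow> k \<ge> 1 \<Longrightarrow> finite {m::nat. P m \<and> m^k dvd d}"
  by (rule finite_subset[of _ "{..d}"]) (auto dest: le_of_pow_dvd)

lemma b_bound:
  assumes y: "y \<ge> 1" and k: "k \<ge> 1" and d: "d > (0::nat)"
  shows "\<bar>real_of_int (\<Sum>m\<in>Mset y k d. moebius_mu m)\<bar> \<le> y"
proof (cases "Mset y k d = {}")
  case True thus ?thesis using y by simp
next
  case False
  then obtain m0 where m0: "real m0 > y" "m0^k dvd d" by (auto simp: Mset_def)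
  have "m0 \<noteq> 1" using m0 y by auto
  then obtain p where p: "prime p" "p dvd m0" using prime_factor_nat by blast
  have pk: "p^k dvd d" using m0(2) p(2) dvd_power_same dvd_trans by blast
  define S where "S = {m::nat. m > 0 \<and> m^k dvd d}"
  have finS: "finite S" unfolding S_def using finite_Sd[OF d k] by simp
  have sum0: "(\<Sum>m\<in>S. moebius_mu m) = 0"
  proof (rule mu_sum_zero[OF finS p(1)])
    show "0 \<notin> S" by (simp add: S_def)
  next
    fix m assume m: "m \<in> S" "\<not> p dvd m"
    have "coprime (p^k) (m^k)" using p(1) m(2) by (simp add: prime_imp_coprime)
    hence "p^k * m^k dvd d" using pk m(1) by (simp add: S_def divides_mult)
    thus "p*m \<in> S" using m p(1) by (simp add: S_def power_mult_distrib prime_gt_0_nat)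
  next
    fix m assume m: "m \<in> S" "p dvd m"
    have "(m div p)^k dvd m^k" by (rule dvd_power_same) (use m(2) in \<open>metis dvd_div_mult_self dvd_triv_left\<close>)
    moreover have "m div p > 0" using m p(1)
      by (metis S_def dvd_div_eq_0_iff gr0I mem_Collect_eq)
    ultimately show "m div p \<in> S" using m by (auto simp: S_def dest: dvd_trans)
  qed
  have MS: "Mset y k d \<subseteq> S" using y by (auto simp: Mset_def S_def)
  define L where "L = S - Mset y k d"
  have "(\<Sum>m\<in>S. moebius_mu m) = (\<Sum>m\<in>Mset y k d. moebius_mu m) + (\<Sum>m\<in>L. moebius_mu m)"
    unfolding L_def using finS MS by (metis sum.subset_diff add.commute)
  hence eq: "(\<Sum>m\<in>Mset y k d. moebius_mu m) = - (\<Sum>m\<in>L. moebius_mu m)" using sum0 by simp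
  have "\<bar>\<Sum>m\<in>L. moebius_mu m\<bar> \<le> (\<Sum>m\<in>L. \<bar>moebius_mu m\<bar>)" by (rule sum_abs)
  also have "\<dots> \<le> (\<Sum>m\<in>L. 1)" by (rule sum_mono) (rule mu_abs_le)
  also have "\<dots> = int (card L)" by simp
  finally have c: "\<bar>\<Sum>m\<in>L. moebius_mu m\<bar> \<le> int (card L)" .
  have aux: "\<not> x \<le> nat \<lfloor>y\<rfloor> \<Longrightarrow> y < real x" for x
  proof -
    assume "\<not> x \<le> nat \<lfloor>y\<rfloor>"
    hence "int x \<ge> \<lfloor>y\<rfloor> + 1" using y by linarith
    hence "real x \<ge> real_of_int \<lfloor>y\<rfloor> + 1" by linarith
    thus ?thesis by linarith
  qed
  have LS: "L \<subseteq> {1..nat \<lfloor>y\<rfloor>}"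
  proof
    fix x assume "x \<in> L"
    hence "x > 0" "\<not> y < real x" by (auto simp: L_def S_def Mset_def)
    thus "x \<in> {1..nat \<lfloor>y\<rfloor>}" using aux by force
  qed
  have "card L \<le> nat \<lfloor>y\<rfloor>" using card_mono[OF _ LS] by simp
  hence "real (card L) \<le> y" using y by linarith
  moreover have "real_of_int \<bar>\<Sum>m\<in>L. moebius_mu m\<bar> \<le> real (card L)"
    using c by (metis of_int_le_iff of_int_of_nat_eq)
  ultimately show ?thesis using eq by simp
qed


lemma dirichlet_unique:
  fixes c :: "nat \<Rightarrow> complex"
  assumes h: "\<And>j. j \<ge> 2 \<Longrightarrow> ((\<lambda>d. c d * inverse (of_nat d ^ j)) has_sum 0) {1..}"
  shows "d \<ge> 1 \<Longrightarrow> c d = 0"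
proof (induction d rule: less_induct)
  case (less N)
  have N: "N \<ge> 1" by fact
  have IH: "\<And>d. 1 \<le> d \<Longrightarrow> d < N \<Longrightarrow> c d = 0" using less by blast
  define r where "r d = real N / real d" for d :: nat
  define q where "q = real N / real (N+1)"
  have q0: "0 \<le> q" and q1: "q < 1" using N by (auto simp: q_def)
  have rq: "0 \<le> r d \<and> r d \<le> q" if "d > N" for d
    using that N unfolding r_def q_def by (auto intro!: divide_left_mono)
  have tail: "((\<lambda>d. c d * of_real (r d ^ j)) has_sum (- c N)) {N<..}" if j: "j \<ge> 2" for j
  proof -
    have "((\<lambda>d. c d * inverse (of_nat d ^ j)) has_sum 0) {N..}"
      using h[OF j] by (subst has_sum_cong_neutral[where T="{1..}"]) (use IH N j in auto)
    hence "((\<lambda>d. of_nat N ^ j * (c d * inverse (of_nat d ^ j))) has_sum 0) {N..}"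
      using has_sum_cmult_right by fastforce
    moreover have "of_nat N ^ j * (c d * inverse (of_nat d ^ j)) = c d * of_real (r d ^ j)"
      if "d \<ge> N" for d using that N
      by (simp add: r_def power_divide divide_simps)
    ultimately have s: "((\<lambda>d. c d * of_real (r d ^ j)) has_sum 0) {N..}"
      by (metis (no_types, lifting) atLeast_iff has_sum_cong)
    have sm: "(\<lambda>d. c d * of_real (r d ^ j)) summable_on {N<..}"
      by (rule summable_on_subset_banach[of _ "{N..}"]) (use s in \<open>auto simp: summable_on_def\<close>)
    then obtain T where T: "((\<lambda>d. c d * of_real (r d ^ j)) has_sum T) {N<..}"
      by (auto simp: summable_on_def)
    have "((\<lambda>d. c d * of_real (r d ^ j)) has_sum (c N * of_real (r N ^ j) + T)) (insert N {N<..})"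
      by (rule has_sum_insert) (use T in auto)
    moreover have "insert N {N<..} = {N..}" by auto
    moreover have "r N = 1" using N by (simp add: r_def)
    ultimately have "c N + T = 0" using s has_sum_unique by fastforce
    thus ?thesis using T by (metis add_eq_0_iff2 minus_minus)
  qed
  have "(\<lambda>d. c d * of_real (r d ^ 2)) summable_on {N<..}"
    using tail[of 2] by (auto simp: summable_on_def)
  hence "(\<lambda>d. norm (c d * of_real (r d ^ 2))) summable_on {N<..}"
    using summable_on_iff_abs_summable_on_complex by metis
  then obtain K where K: "((\<lambda>d. norm (c d * of_real (r d ^ 2))) has_sum K) {N<..}"
    by (auto simp: summable_on_def)
  have bound: "norm (c N) \<le> K * q ^ i" for i
  proof -
    have "((\<lambda>d. norm (c d * of_real (r d ^ 2)) * q^i) has_sum (K * q^i)) {N<..}"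
      using has_sum_cmult_left[OF K] by simp
    moreover have "norm (c d * of_real (r d ^ (i+2))) \<le> norm (c d * of_real (r d ^ 2)) * q^i"
      if "d \<in> {N<..}" for d
    proof -
      have r: "0 \<le> r d" "r d \<le> q" using rq that by auto
      have "r d ^ (i+2) = r d ^ 2 * r d ^ i" by (metis power_add mult.commute)
      also have "\<dots> \<le> r d ^ 2 * q ^ i" using r by (intro mult_left_mono power_mono) auto
      finally have "r d ^ (i+2) \<le> r d ^ 2 * q ^ i" .
      have e1: "norm (c d * of_real (r d ^ (i+2))) = norm (c d) * r d ^ (i+2)"
        by (subst norm_mult, subst norm_of_real) (simp add: r)
      have e2: "norm (c d * of_real (r d ^ 2)) * q^i = norm (c d) * (r d ^ 2 * q ^ i)"
        by (subst norm_mult, subst norm_of_real) (simp add: r)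
      show ?thesis unfolding e1 e2
        by (rule mult_left_mono) (use \<open>r d ^ (i+2) \<le> r d ^ 2 * q ^ i\<close> in auto)
    qed
    ultimately have "norm (- c N) \<le> K * q^i"
      using norm_infsum_le[OF tail[of "i+2"]] by fastforce
    thus ?thesis by simp
  qed
  have "(\<lambda>i. K * q ^ i) \<longlonglongrightarrow> K * 0"
    by (intro tendsto_mult tendsto_const LIMSEQ_power_zero) (use q0 q1 in auto)
  hence "norm (c N) \<le> 0"
    using LIMSEQ_le_const[of "\<lambda>i. K * q ^ i" 0 "norm (c N)"] bound by auto
  thus ?case by simp
qed


lemma pow_conv: "j \<noteq> 0 \<Longrightarrow> (of_nat n :: complex) powr (- of_nat j) = inverse (of_nat n ^ j)"
  by (simp add: powr_minus powr_nat')

lemma inv_abs_summable: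
  assumes "j \<ge> 2"
  shows "(\<lambda>n::nat. norm (inverse (of_nat n ^ j) :: complex)) summable_on A"
proof -
  have "summable (\<lambda>n::nat. inverse (real n ^ j))" by (rule inverse_power_summable) fact
  hence "summable (\<lambda>n::nat. norm (norm (inverse (of_nat n ^ j) :: complex)))"
    by (simp add: norm_inverse norm_power)
  hence "(\<lambda>n::nat. norm (inverse (of_nat n ^ j) :: complex)) summable_on UNIV"
    by (rule norm_summable_imp_summable_on)
  thus ?thesis by (rule summable_on_subset_banach) auto
qed

lemma zeta_has:
  assumes "j \<ge> 2"
  shows "((\<lambda>n. inverse (of_nat n ^ j)) has_sum zeta (of_nat j)) {1..}"
proof -
  have "zeta (of_nat j) = infsum (\<lambda>n::nat. inverse (of_nat n ^ j)) {1..}"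
    unfolding zeta_def by (rule infsum_cong) (use assms in \<open>simp add: pow_conv\<close>)
  moreover have "(\<lambda>n::nat. inverse (of_nat n ^ j) :: complex) summable_on {1..}"
    by (rule abs_summable_summable, rule inv_abs_summable) fact
  ultimately show ?thesis by (simp add: has_sum_infsum)
qed

lemma g_abs_summable:
  assumes "j \<ge> 2"
  shows "(\<lambda>m::nat. norm (of_int (moebius_mu m) * inverse (of_nat m ^ j) :: complex)) summable_on A"
proof (rule Infinite_Sum.abs_summable_on_comparison_test[where g="\<lambda>n. inverse (of_nat n ^ j) :: complex"])
  show "(\<lambda>n::nat. norm (inverse (of_nat n ^ j) :: complex)) summable_on A"
    by (rule inv_abs_summable) fact
next
  fix m :: nat assume "m \<in> A"
  have "\<bar>real_of_int (moebius_mu m)\<bar> \<le> 1" using mu_abs_le by (metis of_int_abs of_int_le_1_iff)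
  thus "norm (of_int (moebius_mu m) * inverse (of_nat m ^ j) :: complex)
        \<le> norm (inverse (of_nat m ^ j) :: complex)"
    by (simp add: norm_mult mult_left_le_one_le)
qed

lemma ftail_has:
  assumes "j \<ge> 2" "k \<ge> 1"
  shows "((\<lambda>m. of_int (moebius_mu m) * inverse (of_nat m ^ (k*j))) has_sum
           f_tail y (of_nat k * of_nat j)) {n. real n > y}"
proof -
  have kj: "k*j \<ge> 2" using assms by (metis le_trans mult_le_mono1 mult_1)
  have pc: "(of_nat n :: complex) powr - (of_nat k * of_nat j) = inverse (of_nat n ^ (k*j))" for n :: nat
    using pow_conv[of "k*j" n] assms by simp
  have "f_tail y (of_nat k * of_nat j) = infsum (\<lambda>m::nat. of_int (moebius_mu m) * inverse (of_nat m ^ (k*j))) {n. real n > y}"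
    unfolding f_tail_def by (rule infsum_cong) (use pc in simp)
  moreover have "(\<lambda>m::nat. of_int (moebius_mu m) * inverse (of_nat m ^ (k*j)) :: complex) summable_on {n. real n > y}"
    by (rule abs_summable_summable, rule g_abs_summable) fact
  ultimately show ?thesis by (simp add: has_sum_infsum)
qed



lemma product_has:
  fixes j k :: nat and y :: real
  assumes j: "j \<ge> 2" and k: "k \<ge> 1"
  defines "g \<equiv> (\<lambda>m::nat. of_int (moebius_mu m) * inverse (of_nat m ^ (k*j)) :: complex)"
  shows "((\<lambda>(n,m). inverse (of_nat n ^ j) * g m) has_sum
           (zeta (of_nat j) * f_tail y (of_nat k * of_nat j))) (Sigma {1..} (\<lambda>_. {n. real n > y}))"
proof (rule has_sum_SigmaI[where g="\<lambda>n. inverse (of_nat n ^ j) * f_tail y (of_nat k * of_nat j)"])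
  have kj: "k*j \<ge> 2" using j k by (metis le_trans mult_le_mono1 mult_1)
  have G: "(g has_sum f_tail y (of_nat k * of_nat j)) {n. real n > y}"
    unfolding g_def by (rule ftail_has[OF j k])
  show "((\<lambda>m. case (n, m) of (n, m) \<Rightarrow> inverse (of_nat n ^ j) * g m) has_sum
         inverse (of_nat n ^ j) * f_tail y (of_nat k * of_nat j)) {n. real n > y}" for n
    using has_sum_cmult_right[OF G, of "inverse (of_nat n ^ j)"] by simp
  show "((\<lambda>n. inverse (of_nat n ^ j) * f_tail y (of_nat k * of_nat j)) has_sum
         zeta (of_nat j) * f_tail y (of_nat k * of_nat j)) {1..}"
    by (rule has_sum_cmult_left, rule zeta_has[OF j])
  have gs: "(\<lambda>m. norm (g m)) summable_on {n. real n > y}"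
    unfolding g_def by (rule g_abs_summable[OF kj])
  have zs: "(\<lambda>n::nat. norm (inverse (of_nat n ^ j) :: complex)) summable_on {1..}"
    by (rule inv_abs_summable[OF j])
  have "(\<lambda>p. norm (inverse (of_nat (fst p) ^ j) * g (snd p))) summable_on (Sigma {1..} (\<lambda>_. {n. real n > y}))"
  proof -
    have "(\<lambda>(n,m). norm (inverse (of_nat n ^ j) :: complex) * norm (g m)) summable_on ({1..} \<times> {n. real n > y})"
    proof (rule summable_on_SigmaI[where g="\<lambda>n. norm (inverse (of_nat n ^ j) :: complex) * infsum (\<lambda>m. norm (g m)) {n. real n > y}"])
      show "((\<lambda>m. case (n, m) of (n, m) \<Rightarrow> norm (inverse (of_nat n ^ j) :: complex) * norm (g m)) has_sum
          norm (inverse (of_nat n ^ j) :: complex) * infsum (\<lambda>m. norm (g m)) {n. real n > y}) {n. real n > y}" for n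
        using has_sum_cmult_right[OF has_sum_infsum[OF gs], of "norm (inverse (of_nat n ^ j) :: complex)"] by simp
      show "(\<lambda>n. norm (inverse (of_nat n ^ j) :: complex) * infsum (\<lambda>m. norm (g m)) {n. real n > y}) summable_on {1..}"
        by (rule summable_on_cmult_left) (rule zs)
    qed auto
    moreover have "(\<lambda>(n,m). norm (inverse (of_nat n ^ j) :: complex) * norm (g m)) =
       (\<lambda>p. norm (inverse (of_nat (fst p) ^ j) * g (snd p)))"
      by (simp only: norm_mult case_prod_unfold)
    ultimately show ?thesis by simp
  qed
  hence "(\<lambda>p. inverse (of_nat (fst p) ^ j) * g (snd p)) summable_on (Sigma {1..} (\<lambda>_. {n. real n > y}))"
    by (rule abs_summable_summable)
  thus "(\<lambda>(n,m). inverse (of_nat n ^ j) * g m) summable_on (Sigma {1..} (\<lambda>_. {n. real n > y}))"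
    by (simp only: case_prod_unfold)
qed

lemma coeff_has:
  fixes j k :: nat and y :: real
  assumes j: "j \<ge> 2" and k: "k \<ge> 1" and y: "y \<ge> 1"
  shows "((\<lambda>d. of_int (\<Sum>m\<in>Mset y k d. moebius_mu m) * inverse (of_nat d ^ j)) has_sum
           (zeta (of_nat j) * f_tail y (of_nat k * of_nat j))) {1..}"
proof -
  define X where "X = zeta (of_nat j) * f_tail y (of_nat k * of_nat j)"
  define g where "g = (\<lambda>m::nat. of_int (moebius_mu m) * inverse (of_nat m ^ (k*j)) :: complex)"
  define P where "P = (\<lambda>(n,m). inverse (of_nat n ^ j) * g m)"
  define Q where "Q = (\<lambda>(d::nat,m::nat). of_int (moebius_mu m) * inverse (of_nat d ^ j) :: complex)"
  have Ph: "(P has_sum X) (Sigma {1..} (\<lambda>_. {n. real n > y}))"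
    unfolding P_def X_def g_def by (rule product_has[OF j k])
  have mpos: "m > 0" if "real m > y" for m :: nat using that y by (cases m) auto
  have Qh: "(Q has_sum X) (Sigma {1..} (Mset y k))"
  proof (subst has_sum_reindex_bij_witness[where j="\<lambda>(d,m). (d div m^k, m)" and i="\<lambda>(n,m). (n*m^k, m)"
          and T="Sigma {1..} (\<lambda>_. {n. real n > y})" and h=P and s'=X])
    show "(P has_sum X) (Sigma {1..} (\<lambda>_. {n. real n > y}))" by (rule Ph)
  next
    fix a :: "nat \<times> nat" assume "a \<in> Sigma {1..} (Mset y k)"
    then obtain d m where a: "a = (d,m)" "d \<ge> 1" "real m > y" "m^k dvd d"
      by (auto simp: Mset_def)
    show "(case case a of (d, m) \<Rightarrow> (d div m ^ k, m) of (n, m) \<Rightarrow> (n * m ^ k, m)) = a"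
      using a by simp
    have "d div m^k \<ge> 1" using a by (metis dvd_div_eq_0_iff not_one_le_zero less_one not_le)
    thus "(case a of (d, m) \<Rightarrow> (d div m ^ k, m)) \<in> Sigma {1..} (\<lambda>_. {n. y < real n})"
      using a by simp
    have dd: "d = (d div m^k) * m^k" using a by simp
    have "(of_nat d ^ j :: complex) = of_nat (d div m^k) ^ j * of_nat m ^ (k*j)"
      by (subst dd) (simp add: power_mult_distrib power_mult)
    thus "P (case a of (d, m) \<Rightarrow> (d div m ^ k, m)) = Q a"
      using a by (simp add: P_def Q_def g_def)
  next
    fix b :: "nat \<times> nat" assume "b \<in> Sigma {1..} (\<lambda>_. {n. real n > y})"
    then obtain n m where b: "b = (n,m)" "n \<ge> 1" "real m > y" by auto
    have "m > 0" using mpos b by auto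
    thus "(case case b of (n, m) \<Rightarrow> (n * m ^ k, m) of (d, m) \<Rightarrow> (d div m ^ k, m)) = b"
      using b by simp
    have "n * m^k \<ge> 1" using b \<open>m > 0\<close> by simp
    thus "(case b of (n, m) \<Rightarrow> (n * m ^ k, m)) \<in> Sigma {1..} (Mset y k)"
      using b by (simp add: Mset_def)
  qed simp
  show ?thesis unfolding X_def[symmetric]
  proof (rule has_sum_Sigma'[OF Qh])
    fix d :: nat assume "d \<in> {1..}"
    hence "finite (Mset y k d)" unfolding Mset_def using finite_Sd[of d k] k by simp
    thus "((\<lambda>m. Q (d, m)) has_sum of_int (\<Sum>m\<in>Mset y k d. moebius_mu m) * inverse (of_nat d ^ j)) (Mset y k d)"
      by (intro has_sum_finiteI) (simp_all add: Q_def sum_distrib_right)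
  qed
qed



theorem lemma1:
  fixes y :: real and k :: nat and a :: "nat \<Rightarrow> complex"
  assumes "y \<ge> 1" and "k \<ge> 2"
    and "\<And>s. Re s > 1 \<Longrightarrow>
           ((\<lambda>d. a d * of_nat d powr (-s)) has_sum (zeta s * f_tail y (of_nat k * s))) {1..}"
  shows "\<forall>d\<ge>1. norm (a d) \<le> y"
proof (intro allI impI)
  fix d :: nat assume d: "d \<ge> 1"
  define b where "b d = (of_int (\<Sum>m\<in>Mset y k d. moebius_mu m) :: complex)" for d
  have k1: "k \<ge> 1" using assms(2) by simp
  have "((\<lambda>d. (a d - b d) * inverse (of_nat d ^ j)) has_sum 0) {1..}" if j: "j \<ge> 2" for j
  proof -
    define X where "X = zeta (of_nat j) * f_tail y (of_nat k * of_nat j)"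
    have "Re (of_nat j :: complex) > 1" using j by simp
    hence A: "((\<lambda>d. a d * of_nat d powr (- of_nat j)) has_sum X) {1..}"
      unfolding X_def by (rule assms(3))
    have A': "((\<lambda>d. a d * inverse (of_nat d ^ j)) has_sum X) {1..}"
    proof -
      have pc: "\<And>n. (of_nat n :: complex) powr (- of_nat j) = inverse (of_nat n ^ j)"
        using pow_conv[of j] j by simp
      show ?thesis using A by (simp only: pc)
    qed
    have B: "((\<lambda>d. b d * inverse (of_nat d ^ j)) has_sum X) {1..}"
      unfolding b_def X_def by (rule coeff_has[OF j k1 assms(1)])
    have B': "((\<lambda>d. - (b d * inverse (of_nat d ^ j))) has_sum (- X)) {1..}"
      using B by (simp only: has_sum_uminus minus_minus)
    have "((\<lambda>d. a d * inverse (of_nat d ^ j) + - (b d * inverse (of_nat d ^ j))) has_sum (X + - X)) {1..}"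
      by (rule has_sum_add[OF A' B'])
    thus ?thesis by (simp add: algebra_simps)
  qed
  hence "a d - b d = 0" using dirichlet_unique[of "\<lambda>d. a d - b d" d] d by blast
  hence "norm (a d) = norm (b d)" by simp
  also have "\<dots> = \<bar>real_of_int (\<Sum>m\<in>Mset y k d. moebius_mu m)\<bar>"
    unfolding b_def by (simp only: norm_of_int)
  also have "\<dots> \<le> y" by (rule b_bound[OF assms(1) k1]) (use d in simp)
  finally show "norm (a d) \<le> y" .
qed

end
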